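(* Let $W=\mathfrak{S}_n$, $\ast=\mathrm{id}$, $w\in I_\ast$, and let $(s_a,s_b,w)$ be a reduced sequence with $|a-b|>1$. Then one of the following holds: (a) $s_aw\ne ws_a$, $s_bs_aws_a\neq s_aws_as_b$, $s_bw\ne ws_b$, $s_as_bws_b\neq s_bws_bs_a$; (b) $s_aw=ws_a$, $s_bs_aw\ne s_aws_b$, $s_bw\neq ws_b$, $s_as_bws_b=s_bws_bs_a$; (c) $s_aw\neq ws_a$, $s_bs_aws_a=s_aws_as_b$, $s_bw=ws_b$, $s_as_bw\neq s_bws_a$; (d) $s_aw=ws_a$, $s_bs_aw=s_aws_b$, $s_bw=ws_b$, $s_as_bw=s_bws_a$.
   Context: $\mathfrak{S}_n$ with $s_i=(i,i+1)$; $I_\ast=\{w\in\mathfrak{S}_n:w^2=1\}$. For a simple transposition $s$ and $w\in I_\ast$: $s\ltimes w=sw$ if $sw=ws$, $s\ltimes w=sws$ otherwise; iterated from the right. $\rho(w)$ is the minimal $k$ with $w=s_{i_1}\ltimes\cdots\ltimes s_{i_k}\ltimes1$. The sequence $(s_a,s_b,w)$ is reduced if $\rho(s_a\ltimes s_b\ltimes w)=\rho(w)+2$. *)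

theory Defs
  imports "HOL-Combinatorics.Combinatorics"
begin

text \<open>The symmetric group S_n realised as permutations of {1..n}; the group
product u w is function composition u \<circ> w and 1 is id.\<close>

definition Sym :: "nat \<Rightarrow> (nat \<Rightarrow> nat) set" where
  "Sym n = {w. w permutes {1..n}}"

text \<open>Twisted involutions for the trivial automorphism: the involutions of S_n.\<close>
definition Inv :: "nat \<Rightarrow> (nat \<Rightarrow> nat) set" where
  "Inv n = {w \<in> Sym n. w \<circ> w = id}"

definition simple :: "nat \<Rightarrow> nat \<Rightarrow> nat" where
  "simple i = Transposition.transpose i (Suc i)"

definition ltimes :: "(nat \<Rightarrow> nat) \<Rightarrow> (nat \<Rightarrow> nat) \<Rightarrow> (nat \<Rightarrow> nat)" where
  "ltimes s w = (if s \<circ> w = w \<circ> s then s \<circ> w else s \<circ> w \<circ> s)"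

definition ltimes_word :: "nat list \<Rightarrow> (nat \<Rightarrow> nat)" where
  "ltimes_word is = foldr (\<lambda>i w. ltimes (simple i) w) is id"

definition rho :: "nat \<Rightarrow> (nat \<Rightarrow> nat) \<Rightarrow> nat" where
  "rho n w = (LEAST k. \<exists>is. length is = k \<and> set is \<subseteq> {1..<n} \<and> w = ltimes_word is)"

definition reduced_seq :: "nat \<Rightarrow> nat \<Rightarrow> nat \<Rightarrow> (nat \<Rightarrow> nat) \<Rightarrow> bool" where
  "reduced_seq n a b w \<longleftrightarrow>
     rho n (ltimes (simple a) (ltimes (simple b) w)) = rho n w + 2"

end

theory Submission
  imports Defs
begin

lemma conj_iff: assumes "s \<circ> s = id" shows "(x = y) \<longleftrightarrow> (s \<circ> x \<circ> s = s \<circ> y \<circ> s)"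
proof
  assume "s \<circ> x \<circ> s = s \<circ> y \<circ> s"
  then have "s \<circ> (s \<circ> x \<circ> s) \<circ> s = s \<circ> (s \<circ> y \<circ> s) \<circ> s" by simp
  then show "x = y" using assms by (metis comp_assoc id_comp comp_id)
qed simp
lemma left_iff: assumes "s \<circ> s = id" shows "(x = y) \<longleftrightarrow> (s \<circ> x = s \<circ> y)"
proof
  assume "s \<circ> x = s \<circ> y"
  then have "s \<circ> (s \<circ> x) = s \<circ> (s \<circ> y)" by simp
  then show "x = y" using assms by (metis comp_assoc id_comp)
qed simp

lemma abstr:
  fixes sa sb w :: "'a \<Rightarrow> 'a"
  assumes ia: "sa \<circ> sa = id" and ib: "sb \<circ> sb = id" and c: "sa \<circ> sb = sb \<circ> sa"
  shows "(sa \<circ> w \<noteq> w \<circ> sa \<and> sb \<circ> sa \<circ> w \<circ> sa \<noteq> sa \<circ> w \<circ> sa \<circ> sb \<and>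
          sb \<circ> w \<noteq> w \<circ> sb \<and> sa \<circ> sb \<circ> w \<circ> sb \<noteq> sb \<circ> w \<circ> sb \<circ> sa)
       \<or> (sa \<circ> w = w \<circ> sa \<and> sb \<circ> sa \<circ> w \<noteq> sa \<circ> w \<circ> sb \<and>
          sb \<circ> w \<noteq> w \<circ> sb \<and> sa \<circ> sb \<circ> w \<circ> sb = sb \<circ> w \<circ> sb \<circ> sa)
       \<or> (sa \<circ> w \<noteq> w \<circ> sa \<and> sb \<circ> sa \<circ> w \<circ> sa = sa \<circ> w \<circ> sa \<circ> sb \<and>
          sb \<circ> w = w \<circ> sb \<and> sa \<circ> sb \<circ> w \<noteq> sb \<circ> w \<circ> sa)
       \<or> (sa \<circ> w = w \<circ> sa \<and> sb \<circ> sa \<circ> w = sa \<circ> w \<circ> sb \<and>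
          sb \<circ> w = w \<circ> sb \<and> sa \<circ> sb \<circ> w = sb \<circ> w \<circ> sa)"
proof -
  have ia': "\<And>f. sa \<circ> (sa \<circ> f) = f" using ia by (simp add: comp_assoc[symmetric])
  have ib': "\<And>f. sb \<circ> (sb \<circ> f) = f" using ib by (simp add: comp_assoc[symmetric])
  have c': "\<And>f. sb \<circ> (sa \<circ> f) = sa \<circ> (sb \<circ> f)" using c by (simp add: comp_assoc[symmetric])
  have E1: "(sb \<circ> sa \<circ> w \<circ> sa = sa \<circ> w \<circ> sa \<circ> sb) \<longleftrightarrow> (sb \<circ> w = w \<circ> sb)"
    apply (subst conj_iff[OF ia])
    apply (simp add: comp_assoc ia' ib' c' c ia ib)
    done
  have E2: "(sa \<circ> sb \<circ> w \<circ> sb = sb \<circ> w \<circ> sb \<circ> sa) \<longleftrightarrow> (sa \<circ> w = w \<circ> sa)"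
    apply (subst conj_iff[OF ib])
    apply (simp add: comp_assoc ia' ib' c' c ia ib)
    done
  have E3: "(sb \<circ> sa \<circ> w = sa \<circ> w \<circ> sb) \<longleftrightarrow> (sb \<circ> w = w \<circ> sb)"
    by (simp add: comp_assoc c' left_iff[OF ia, symmetric])
  have E4: "(sa \<circ> sb \<circ> w = sb \<circ> w \<circ> sa) \<longleftrightarrow> (sa \<circ> w = w \<circ> sa)"
    by (simp add: comp_assoc c'[symmetric] left_iff[OF ib, symmetric])
  show ?thesis using E1 E2 E3 E4 by blast
qed

lemma simple_inv: "simple a \<circ> simple a = id"
  by (simp add: simple_def fun_eq_iff)

lemma simple_comm: assumes "\<bar>int a - int b\<bar> > 1"
  shows "simple a \<circ> simple b = simple b \<circ> simple a"
  using assms by (auto simp add: simple_def fun_eq_iff Transposition.transpose_def)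

theorem corollary2p15:
  fixes n a b :: nat and w :: "nat \<Rightarrow> nat"
  assumes "1 \<le> a" and "a < n" and "1 \<le> b" and "b < n"
    and "w \<in> Inv n"
    and "reduced_seq n a b w"
    and "\<bar>int a - int b\<bar> > 1"
  defines "sa \<equiv> simple a" and "sb \<equiv> simple b"
  shows "(sa \<circ> w \<noteq> w \<circ> sa \<and> sb \<circ> sa \<circ> w \<circ> sa \<noteq> sa \<circ> w \<circ> sa \<circ> sb \<and>
          sb \<circ> w \<noteq> w \<circ> sb \<and> sa \<circ> sb \<circ> w \<circ> sb \<noteq> sb \<circ> w \<circ> sb \<circ> sa)
       \<or> (sa \<circ> w = w \<circ> sa \<and> sb \<circ> sa \<circ> w \<noteq> sa \<circ> w \<circ> sb \<and>
          sb \<circ> w \<noteq> w \<circ> sb \<and> sa \<circ> sb \<circ> w \<circ> sb = sb \<circ> w \<circ> sb \<circ> sa)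
       \<or> (sa \<circ> w \<noteq> w \<circ> sa \<and> sb \<circ> sa \<circ> w \<circ> sa = sa \<circ> w \<circ> sa \<circ> sb \<and>
          sb \<circ> w = w \<circ> sb \<and> sa \<circ> sb \<circ> w \<noteq> sb \<circ> w \<circ> sa)
       \<or> (sa \<circ> w = w \<circ> sa \<and> sb \<circ> sa \<circ> w = sa \<circ> w \<circ> sb \<and>
          sb \<circ> w = w \<circ> sb \<and> sa \<circ> sb \<circ> w = sb \<circ> w \<circ> sa)"
  proof -
  show ?thesis unfolding sa_def sb_def
    by (rule abstr[OF simple_inv simple_inv simple_comm[OF assms(7)]])
qed

end
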